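(* Let $v\in \mathbb{D}_\delta$. Fix a decomposition $v(x)=\mathcal V(x_3)+{\bf Q}(x_3)(x_1{\bf e}_1+x_2{\bf e}_2)+\overline{\overline v}(x)$ of $v$ on the rod $B_\delta$ as described in the context, set $\mathcal W(x_3)=\mathcal V(x_3)-x_3{\bf e}_3$, and for $x_3\in[-\delta,L]$ define $$\mathcal W^{(m)}(x_3)=\mathcal W(0)+\int_0^{x_3}({\bf Q}(t)-{\bf I}_3){\bf e}_3\,dt,\qquad \mathcal W^{(s)}=\mathcal W-\mathcal W^{(m)}.$$ Then there is a constant $C$ independent of $\delta$ such that $$\|\mathcal W^{(s)}\|_{H^1(-\delta,L;\mathbb R^3)}\le \frac{C}{\delta}{\bf d}(v,B_\delta),\qquad \|\mathcal W^{(m)}_\alpha-\mathcal W_\alpha(0)\|_{H^2(-\delta,L)}\le \frac{C}{\delta^2}{\bf d}(v,B_\delta)+C|||{\bf Q}(0)-{\bf I}_3|||\ (\alpha=1,2),$$ $$\|\mathcal W^{(m)}_3-\mathcal W^{(m)}_3(0)\|_{H^1(-\delta,L)}\le \frac{C}{\delta^4}[{\bf d}(v,B_\delta)]^2+C|({\bf Q}(0)-{\bf I}_3){\bf e}_3\cdot{\bf e}_3|,$$ $$\Big\|\frac{d\mathcal W^{(m)}_3}{dx_3}\Big\|_{L^2(-\delta,\delta)}\le \frac{C}{\delta^{5/2}}[{\bf d}(v,B_\delta)]^2+C\delta^{1/2}|({\bf Q}(0)-{\bf I}_3){\bf e}_3\cdot{\bf e}_3|.$$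
   Context: Let $\omega\subset\mathbb R^2$ be a bounded domain with Lipschitz boundary containing the origin $O$; let $D$ be the open unit disc centered at $O$, with $\overline D\subset\omega$; let $\gamma_0\subset\partial\omega$ be an open set made of finitely many connected components with pairwise disjoint closures; fix $L>0$. For $\delta>0$ let $D_\delta$ be the disc of radius $\delta$ centered at $O$, $\Omega_\delta=\omega\times(-\delta,\delta)$ (plate), $B_\delta=D_\delta\times(-\delta,L)$ (rod), $\mathcal S_\delta=\Omega_\delta\cup B_\delta$, $\Gamma_{0,\delta}=\gamma_0\times(-\delta,\delta)$, and $\mathbb D_\delta=\{v\in H^1(\mathcal S_\delta;\mathbb R^3): v=I_d \text{ on }\Gamma_{0,\delta}\}$, where $I_d$ is the identity map of $\mathbb R^3$. $({\bf e}_1,{\bf e}_2,{\bf e}_3)$ is the canonical basis, ${\bf I}_3$ the identity matrix, $|||\cdot|||$ the Frobenius norm, and ${\bf d}(v,\mathcal O)=\|\mathrm{dist}(\nabla v,SO(3))\|_{L^2(\mathcal O)}$. Rod decomposition (known result): every $v\in H^1(B_\delta;\mathbb R^3)$ can be written $v(x)=\mathcal V(x_3)+{\bf Q}(x_3)(x_1{\bf e}_1+x_2{\bf e}_2)+\overline{\overline v}(x)$ with $\mathcal V(x_3)=\frac1{|D_\delta|}\int_{D_\delta}v(x)\,dx_1dx_2\in H^1(-\delta,L;\mathbb R^3)$, ${\bf Q}\in H^1(-\delta,L;SO(3))$, $\overline{\overline v}\in H^1(B_\delta;\mathbb R^3)$, and, with $C$ independent of $\delta$ and $L$: $\|\overline{\overline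 v}\|_{L^2}\le C\delta{\bf d}(v,B_\delta)$, $\|\nabla\overline{\overline v}\|_{L^2}\le C{\bf d}(v,B_\delta)$, $\|d{\bf Q}/dx_3\|_{L^2(-\delta,L)}\le C\delta^{-2}{\bf d}(v,B_\delta)$, $\|d\mathcal V/dx_3-{\bf Q}{\bf e}_3\|_{L^2(-\delta,L)}\le C\delta^{-1}{\bf d}(v,B_\delta)$, $\|\nabla v-{\bf Q}\|_{L^2(B_\delta)}\le C{\bf d}(v,B_\delta)$. Such a decomposition is fixed. *)

theory Defs
  imports "HOL-Analysis.Analysis"
begin

text \<open>The rotation group SO(3); matrices are of type real^3^3, the norm on this
type is the Frobenius norm.\<close>
definition SO3 :: "(real^3^3) set" where
  "SO3 = {R. orthogonal_matrix R \<and> det R = 1}"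

definition proj12 :: "real^3 \<Rightarrow> real^2" where
  "proj12 x = vector [x$1, x$2]"

definition L2_on :: "'a::euclidean_space set \<Rightarrow> ('a \<Rightarrow> 'b::euclidean_space) \<Rightarrow> bool" where
  "L2_on S f \<longleftrightarrow> set_borel_measurable lebesgue S f
      \<and> set_integrable lebesgue S (\<lambda>x. (norm (f x))^2)"

definition L2norm :: "'a::euclidean_space set \<Rightarrow> ('a \<Rightarrow> 'b::euclidean_space) \<Rightarrow> real" where
  "L2norm S f = sqrt (LINT x:S|lebesgue. (norm (f x))^2)"

text \<open>One-dimensional H^1(a,b): f (its continuous representative) is absolutely continuous
  with L^2 derivative g, i.e. g is the weak derivative of f on (a,b).\<close>
definition H1_1d :: "real \<Rightarrow> real \<Rightarrow> (real \<Rightarrow> 'b::euclidean_space) \<Rightarrow> (real \<Rightarrow> 'b) \<Rightarrow> bool" where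
  "H1_1d a b f g \<longleftrightarrow> L2_on {a<..<b} f \<and> L2_on {a<..<b} g
      \<and> set_integrable lebesgue {a..b} g
      \<and> (\<forall>x y. a \<le> x \<longrightarrow> x \<le> y \<longrightarrow> y \<le> b \<longrightarrow> f y - f x = (LINT t:{x..y}|lebesgue. g t))"

definition test_fun :: "(real^3) set \<Rightarrow> (real^3 \<Rightarrow> real) \<Rightarrow> (real^3 \<Rightarrow> real^3) \<Rightarrow> bool" where
  "test_fun U \<phi> \<phi>' \<longleftrightarrow> (\<forall>x. (\<phi> has_derivative (\<lambda>h. \<phi>' x \<bullet> h)) (at x))
      \<and> continuous_on UNIV \<phi>'
      \<and> compact (closure {x. \<phi> x \<noteq> 0}) \<and> closure {x. \<phi> x \<noteq> 0} \<subseteq> U"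

text \<open>H^1(U;R^3) with weak gradient Dv, (Dv x)$i$j = d v_i / d x_j.\<close>
definition H1_3d :: "(real^3) set \<Rightarrow> (real^3 \<Rightarrow> real^3) \<Rightarrow> (real^3 \<Rightarrow> real^3^3) \<Rightarrow> bool" where
  "H1_3d U v Dv \<longleftrightarrow> L2_on U v \<and> L2_on U Dv
     \<and> (\<forall>\<phi> \<phi>'. test_fun U \<phi> \<phi>' \<longrightarrow> (\<forall>i j.
          (LINT x:U|lebesgue. (v x $ i) * (\<phi>' x $ j)) = - (LINT x:U|lebesgue. (Dv x $ i $ j) * \<phi> x)))"

definition lipschitz_domain :: "(real^2) set \<Rightarrow> bool" where
  "lipschitz_domain \<omega> \<longleftrightarrow> open \<omega> \<and> connected \<omega> \<and> bounded \<omega> \<and> \<omega> \<noteq> {}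
     \<and> (\<forall>p \<in> frontier \<omega>. \<exists>r>0. \<exists>R::real^2^2. \<exists>g::real \<Rightarrow> real. \<exists>K.
          orthogonal_matrix R \<and> lipschitz_on K UNIV g
          \<and> (\<forall>x \<in> ball p r. x \<in> \<omega> \<longleftrightarrow> (R *v (x - p)) $ 2 < g ((R *v (x - p)) $ 1)))"

definition plate :: "(real^2) set \<Rightarrow> real \<Rightarrow> (real^3) set" where
  "plate \<omega> \<delta> = {x. proj12 x \<in> \<omega> \<and> -\<delta> < x$3 \<and> x$3 < \<delta>}"

definition rod :: "real \<Rightarrow> real \<Rightarrow> (real^3) set" where
  "rod L \<delta> = {x. (x$1)^2 + (x$2)^2 < \<delta>^2 \<and> -\<delta> < x$3 \<and> x$3 < L}"

definition struct :: "(real^2) set \<Rightarrow> real \<Rightarrow> real \<Rightarrow> (real^3) set" where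
  "struct \<omega> L \<delta> = plate \<omega> \<delta> \<union> rod L \<delta>"

definition Gamma0 :: "(real^2) set \<Rightarrow> real \<Rightarrow> (real^3) set" where
  "Gamma0 \<gamma>0 \<delta> = {x. proj12 x \<in> \<gamma>0 \<and> -\<delta> < x$3 \<and> x$3 < \<delta>}"

text \<open>v \<in> D_delta (with weak gradient Dv): v \<in> H^1(S_delta) and v = I_d on Gamma_{0,delta}
  in the trace sense, expressed as: v - I_d extended by 0 across Gamma_{0,delta}
  is H^1 on a neighbourhood of Gamma_{0,delta} united with S_delta.\<close>
definition in_D :: "(real^2) set \<Rightarrow> (real^2) set \<Rightarrow> real \<Rightarrow> real \<Rightarrow> (real^3 \<Rightarrow> real^3) \<Rightarrow> (real^3 \<Rightarrow> real^3^3) \<Rightarrow> bool" where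
  "in_D \<omega> \<gamma>0 L \<delta> v Dv \<longleftrightarrow> H1_3d (struct \<omega> L \<delta>) v Dv
     \<and> (\<exists>V. open V \<and> Gamma0 \<gamma>0 \<delta> \<subseteq> V
          \<and> H1_3d (struct \<omega> L \<delta> \<union> V)
               (\<lambda>x. if x \<in> struct \<omega> L \<delta> then v x - x else 0)
               (\<lambda>x. if x \<in> struct \<omega> L \<delta> then Dv x - mat 1 else 0))"

definition dSO :: "real \<Rightarrow> real \<Rightarrow> (real^3 \<Rightarrow> real^3^3) \<Rightarrow> real" where
  "dSO L \<delta> Dv = L2norm (rod L \<delta>) (\<lambda>x. infdist (Dv x) SO3)"

text \<open>The rod decomposition v = V(x3) + Q(x3)(x1 e1 + x2 e2) + vbar on B_delta,
  with the estimates of the known result (constant C0).\<close>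
definition rod_decomposition ::
  "real \<Rightarrow> real \<Rightarrow> real \<Rightarrow> (real^3 \<Rightarrow> real^3) \<Rightarrow> (real^3 \<Rightarrow> real^3^3)
   \<Rightarrow> (real \<Rightarrow> real^3) \<Rightarrow> (real \<Rightarrow> real^3) \<Rightarrow> (real \<Rightarrow> real^3^3) \<Rightarrow> (real \<Rightarrow> real^3^3)
   \<Rightarrow> (real^3 \<Rightarrow> real^3) \<Rightarrow> (real^3 \<Rightarrow> real^3^3) \<Rightarrow> bool" where
  "rod_decomposition C0 L \<delta> v Dv V dV Q dQ vb Dvb \<longleftrightarrow>
     (AE t in lebesgue. t \<in> {-\<delta><..<L} \<longrightarrow>
        V t = (1 / (pi * \<delta>^2)) *\<^sub>R (LINT y:ball (0::real^2) \<delta>|lebesgue. v (vector [y$1, y$2, t])))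
   \<and> H1_1d (-\<delta>) L V dV
   \<and> H1_1d (-\<delta>) L Q dQ \<and> (\<forall>t \<in> {-\<delta>..L}. Q t \<in> SO3)
   \<and> H1_3d (rod L \<delta>) vb Dvb
   \<and> (AE x in lebesgue. x \<in> rod L \<delta> \<longrightarrow>
        v x = V (x$3) + Q (x$3) *v vector [x$1, x$2, 0] + vb x)
   \<and> L2norm (rod L \<delta>) vb \<le> C0 * \<delta> * dSO L \<delta> Dv
   \<and> L2norm (rod L \<delta>) Dvb \<le> C0 * dSO L \<delta> Dv
   \<and> L2norm {-\<delta><..<L} dQ \<le> C0 / \<delta>^2 * dSO L \<delta> Dv
   \<and> L2norm {-\<delta><..<L} (\<lambda>t. dV t - Q t *v axis 3 1) \<le> C0 / \<delta> * dSO L \<delta> Dv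
   \<and> L2norm (rod L \<delta>) (\<lambda>x. Dv x - Q (x$3)) \<le> C0 * dSO L \<delta> Dv"

end

theory Submission
  imports Defs
begin

lemma SI_lin:
  fixes f :: "'a \<Rightarrow> 'b::{banach, second_countable_topology}"
    and T :: "'b \<Rightarrow> 'c::{banach, second_countable_topology}"
  assumes "set_integrable M S f" "bounded_linear T"
  shows "set_integrable M S (\<lambda>x. T (f x))"
    and "(LINT x:S|M. T (f x)) = T (LINT x:S|M. f x)"
proof -
  have e: "(\<lambda>x. indicator S x *\<^sub>R T (f x)) = (\<lambda>x. T (indicator S x *\<^sub>R f x))"
    using assms(2) by (simp add: linear_simps)
  show "set_integrable M S (\<lambda>x. T (f x))"
    using assms unfolding set_integrable_def e by (rule integrable_bounded_linear[rotated])
  show "(LINT x:S|M. T (f x)) = T (LINT x:S|M. f x)"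
    using assms unfolding set_integrable_def set_lebesgue_integral_def e
    by (rule integral_bounded_linear[rotated])
qed

lemma SBM_comp:
  fixes f :: "'a \<Rightarrow> 'b::real_normed_vector" and T :: "'b \<Rightarrow> 'c::real_normed_vector"
  assumes "set_borel_measurable M S f" "continuous_on UNIV T" "T 0 = 0"
  shows "set_borel_measurable M S (\<lambda>x. T (f x))"
proof -
  have e: "(\<lambda>x. indicator S x *\<^sub>R T (f x)) = (\<lambda>x. T (indicator S x *\<^sub>R f x))"
    using assms(3) by (auto simp: indicator_def)
  show ?thesis using assms(1) unfolding set_borel_measurable_def e
    by (intro measurable_compose[OF _ borel_measurable_continuous_onI[OF assms(2)]])
qed

lemma L2_onI:
  assumes "set_integrable lebesgue S f" "set_integrable lebesgue S (\<lambda>x. norm (f x)^2)"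
  shows "L2_on S f"
  using assms unfolding L2_on_def set_borel_measurable_def set_integrable_def
  by (auto intro: borel_measurable_integrable)

lemma L2_cont:
  fixes f :: "real \<Rightarrow> 'b::euclidean_space"
  assumes "continuous_on {a..b} f"
  shows "L2_on {a<..<b} f"
proof -
  have c2: "continuous_on {a..b} (\<lambda>x. norm (f x)^2)"
    by (intro continuous_intros assms)
  have i1: "set_integrable lebesgue {a..b} f"
    using absolutely_integrable_continuous[of a b f] assms by simp
  have i2: "set_integrable lebesgue {a..b} (\<lambda>x. norm (f x)^2)"
    using absolutely_integrable_continuous[of a b "\<lambda>x. norm (f x)^2"] c2 by simp
  show ?thesis
    by (rule L2_onI; rule set_integrable_subset[OF _ _ greaterThanLessThan_subseteq_atLeastAtMost_iff[THEN iffD2]])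
       (use i1 i2 in auto)
qed

lemma measure_leb_Ioo: "a \<le> b \<Longrightarrow> measure lebesgue {a<..<(b::real)} = b - a"
  by simp
lemma measure_leb_Icc: "a \<le> b \<Longrightarrow> measure lebesgue {a..(b::real)} = b - a"
  by simp
lemma emeasure_leb_sing: "emeasure lebesgue {x::real} = 0"
  by simp

lemma SI_Ioo_Icc:
  fixes f :: "real \<Rightarrow> 'b::{banach, second_countable_topology}"
  shows "set_integrable lebesgue {a<..<b} f \<longleftrightarrow> set_integrable lebesgue {a..b} f"
    and "(LINT x:{a<..<b}|lebesgue. f x) = (LINT x:{a..b}|lebesgue. f x)"
  by (rule set_integrable_discrete_difference[where X="{a,b}"]; auto)
     (rule set_integral_discrete_difference[where X="{a,b}"]; auto)

lemma L2_diff: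
  fixes f h :: "'a::euclidean_space \<Rightarrow> 'b::euclidean_space"
  assumes "L2_on S f" "L2_on S h"
  shows "L2_on S (\<lambda>x. f x - h x)"
proof -
  have m1: "set_borel_measurable lebesgue S f" "set_borel_measurable lebesgue S h"
    using assms unfolding L2_on_def by auto
  have m: "set_borel_measurable lebesgue S (\<lambda>x. f x - h x)"
    using m1 unfolding set_borel_measurable_def by (simp add: scaleR_diff_right)
  have m2: "set_borel_measurable lebesgue S (\<lambda>x. norm (f x - h x)^2)"
    by (rule SBM_comp[OF m, of "\<lambda>v. norm v ^2"]) (simp_all add: continuous_on_power continuous_on_norm continuous_on_id)
  have i: "set_integrable lebesgue S (\<lambda>x. 2 * norm (f x)^2 + 2 * norm (h x)^2)"
    using assms unfolding L2_on_def by auto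
  have "set_integrable lebesgue S (\<lambda>x. norm (f x - h x)^2)"
  proof (rule set_integrable_bound[OF i m2], rule AE_I2, intro impI)
    fix x
    have "norm (f x - h x) \<le> norm (f x) + norm (h x)" by (rule norm_triangle_ineq4)
    hence "norm (f x - h x)^2 \<le> (norm (f x) + norm (h x))^2"
      by (intro power_mono) auto
    also have "\<dots> \<le> 2 * norm (f x)^2 + 2 * norm (h x)^2"
      proof -
      have "0 \<le> (norm (f x) - norm (h x))^2" by simp
      thus ?thesis by (simp add: power2_eq_square algebra_simps)
    qed
    finally show "norm (norm (f x - h x)^2) \<le> norm (2 * norm (f x)^2 + 2 * norm (h x)^2)"
      by simp
  qed
  with m show ?thesis unfolding L2_on_def by auto
qed

lemma L2_lin:
  fixes f :: "'a::euclidean_space \<Rightarrow> 'b::euclidean_space" and T :: "'b \<Rightarrow> 'c::euclidean_space"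
  assumes "L2_on S f" "bounded_linear T" "\<And>x. norm (T x) \<le> norm x"
  shows "L2_on S (\<lambda>x. T (f x))"
proof -
  have m1: "set_borel_measurable lebesgue S f" using assms unfolding L2_on_def by auto
  have cT: "continuous_on UNIV T" using assms(2) linear_continuous_on by blast
  have T0: "T 0 = 0" using assms(2) by (simp add: linear_simps)
  have m: "set_borel_measurable lebesgue S (\<lambda>x. T (f x))"
    by (rule SBM_comp[OF m1 cT T0])
  have m2: "set_borel_measurable lebesgue S (\<lambda>x. norm (T (f x))^2)"
    by (rule SBM_comp[OF m, of "\<lambda>v. norm v ^2"]) (simp_all add: continuous_on_power continuous_on_norm continuous_on_id)
  have i: "set_integrable lebesgue S (\<lambda>x. norm (f x)^2)"
    using assms unfolding L2_on_def by auto
  have "set_integrable lebesgue S (\<lambda>x. norm (T (f x))^2)"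
    by (rule set_integrable_bound[OF i m2], rule AE_I2)
       (simp add: assms(3) power_mono)
  with m show ?thesis unfolding L2_on_def by auto
qed

lemma L2int_nonneg: "0 \<le> (LINT x:S|M. (norm (f x))^2)"
  unfolding set_lebesgue_integral_def
  by (rule integral_nonneg_AE) (simp add: indicator_def)

lemma L2norm_nonneg: "0 \<le> L2norm S f"
  unfolding L2norm_def by (simp add: L2int_nonneg)

lemma L2norm_le_sup:
  fixes f :: "'a::euclidean_space \<Rightarrow> 'b::euclidean_space"
  assumes S: "S \<in> sets lebesgue" "emeasure lebesgue S < \<infinity>" and B: "0 \<le> B"
    and bd: "\<And>x. x \<in> S \<Longrightarrow> norm (f x) \<le> B"
  shows "L2norm S f \<le> sqrt (measure lebesgue S) * B"
proof -
  have "(LINT x:S|lebesgue. norm (f x)^2) \<le> measure lebesgue S * B^2"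
  proof (cases "set_integrable lebesgue S (\<lambda>x. norm (f x)^2)")
    case True
    have "(LINT x:S|lebesgue. norm (f x)^2) \<le> (LINT x:S|lebesgue. B^2)"
      apply (rule set_integral_mono[OF True])
      using S apply (simp add: set_integrable_def less_top[symmetric])
      using bd by (simp add: power_mono)
    also have "\<dots> = measure lebesgue S * B^2"
      using S by (simp add: set_integral_const less_top[symmetric])
    finally show ?thesis .
  next
    case False
    hence "(LINT x:S|lebesgue. norm (f x)^2) = 0"
      unfolding set_integrable_def set_lebesgue_integral_def
      by (rule not_integrable_integral_eq)
    thus ?thesis by simp
  qed
  hence "L2norm S f \<le> sqrt (measure lebesgue S * B^2)"
    unfolding L2norm_def by simp
  also have "\<dots> = sqrt (measure lebesgue S) * B" using B by (simp add: real_sqrt_mult)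
  finally show ?thesis .
qed

lemma L2norm_mono:
  fixes f :: "'a::euclidean_space \<Rightarrow> 'b::euclidean_space" and h :: "'a \<Rightarrow> 'c::euclidean_space"
  assumes "L2_on S f" and bd: "\<And>x. x \<in> S \<Longrightarrow> norm (h x) \<le> norm (f x)"
  shows "L2norm S h \<le> L2norm S f"
proof -
  have i: "set_integrable lebesgue S (\<lambda>x. norm (f x)^2)" using assms(1) unfolding L2_on_def by auto
  have "(LINT x:S|lebesgue. norm (h x)^2) \<le> (LINT x:S|lebesgue. norm (f x)^2)"
  proof (cases "set_integrable lebesgue S (\<lambda>x. norm (h x)^2)")
    case True
    show ?thesis
      by (rule set_integral_mono[OF True i]) (simp add: bd power_mono)
  next
    case False
    hence "(LINT x:S|lebesgue. norm (h x)^2) = 0"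
      unfolding set_integrable_def set_lebesgue_integral_def
      by (rule not_integrable_integral_eq)
    moreover have "0 \<le> (LINT x:S|lebesgue. norm (f x)^2)"
      unfolding set_lebesgue_integral_def
      by (rule integral_nonneg_AE) (simp add: indicator_def)
    ultimately show ?thesis by simp
  qed
  thus ?thesis unfolding L2norm_def by simp
qed

lemma real_CS:
  fixes I N m :: real
  assumes h: "\<And>l. l > 0 \<Longrightarrow> I \<le> (l * N + m / l) / 2" and N: "0 \<le> N" and m: "0 \<le> m"
  shows "I \<le> sqrt m * sqrt N"
proof (cases "N > 0 \<and> m > 0")
  case True
  define l where "l = sqrt m / sqrt N"
  have l: "l > 0" using True by (simp add: l_def)
  have sN: "sqrt N * sqrt N = N" "sqrt m * sqrt m = m" using N m by simp_all
  have "l * N = sqrt m * sqrt N" using True unfolding l_def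
    by (metis sN(1) divide_eq_eq mult.assoc real_sqrt_gt_0_iff less_irrefl times_divide_eq_left)
  moreover have "m / l = sqrt m * sqrt N" using True unfolding l_def
    by (metis sN(2) divide_divide_eq_right mult.commute nonzero_mult_div_cancel_left real_sqrt_gt_0_iff less_irrefl times_divide_eq_left)
  ultimately show ?thesis using h[OF l] by (simp add: mult.commute)
next
  case False
  show ?thesis
  proof (rule ccontr)
    assume "\<not> ?thesis"
    hence I: "I > 0" using False N m by auto
    show False
    proof (cases "N = 0")
      case True
      have "I \<le> (((m + 1) / I) * N + m / ((m+1)/I)) / 2" by (rule h) (use I m in auto)
      also have "\<dots> = I * m / (2 * (m+1))" using True I m by (simp add: ac_simps)
      also have "\<dots> < I" using I m by (simp add: divide_less_eq)
      finally show False by simp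
    next
      case False
      hence "m = 0" using \<open>\<not> (N > 0 \<and> m > 0)\<close> N m by auto
      have "I \<le> ((I / (N+1)) * N + m / (I / (N+1))) / 2" by (rule h) (use I N in auto)
      also have "\<dots> = I * N / (2 * (N+1))" using \<open>m = 0\<close> by simp
      also have "\<dots> < I" using I N by (simp add: divide_less_eq)
      finally show False by simp
    qed
  qed
qed

lemma H1_cont_aux:
  fixes f g :: "real \<Rightarrow> 'b::euclidean_space"
  assumes gi: "set_integrable lebesgue {a..b} g"
    and id: "\<And>x y. a \<le> x \<Longrightarrow> x \<le> y \<Longrightarrow> y \<le> b \<Longrightarrow> f y - f x = (LINT t:{x..y}|lebesgue. g t)"
  shows "continuous_on {a..b} f"
proof -
  have gI: "g integrable_on {a..b}" using set_lebesgue_integral_eq_integral(1)[OF gi] .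
  have e: "f a + integral {a..t} g = f t" if t: "t \<in> {a..b}" for t
  proof -
    have "set_integrable lebesgue {a..t} g" by (rule set_integrable_subset[OF gi]) (use t in auto)
    hence "(LINT s:{a..t}|lebesgue. g s) = integral {a..t} g" by (rule set_lebesgue_integral_eq_integral(2))
    with id[of a t] t show ?thesis by (simp add: algebra_simps)
  qed
  have "continuous_on {a..b} (\<lambda>t. f a + integral {a..t} g)"
    by (intro continuous_intros indefinite_integral_continuous_1 gI)
  thus ?thesis using e by (rule continuous_on_eq)
qed

lemma H1I:
  fixes f g :: "real \<Rightarrow> 'b::euclidean_space"
  assumes "L2_on {a<..<b} g" "set_integrable lebesgue {a..b} g"
    and "\<And>x y. a \<le> x \<Longrightarrow> x \<le> y \<Longrightarrow> y \<le> b \<Longrightarrow> f y - f x = (LINT t:{x..y}|lebesgue. g t)"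
  shows "H1_1d a b f g"
  unfolding H1_1d_def using assms L2_cont[OF H1_cont_aux[OF assms(2,3)]] by blast

lemma H1_cont:
  fixes f g :: "real \<Rightarrow> 'b::euclidean_space"
  assumes "H1_1d a b f g" shows "continuous_on {a..b} f"
  using assms unfolding H1_1d_def by (intro H1_cont_aux) auto

lemma SI_subset_mono:
  fixes h :: "'a \<Rightarrow> real"
  assumes "set_integrable M B h" "A \<subseteq> B" "A \<in> sets M" "\<And>x. 0 \<le> h x"
  shows "(LINT x:A|M. h x) \<le> (LINT x:B|M. h x)"
proof -
  have "set_integrable M A h" by (rule set_integrable_subset[OF assms(1,3,2)])
  thus ?thesis using assms unfolding set_lebesgue_integral_def set_integrable_def
    by (intro integral_mono) (auto simp: indicator_def)
qed

lemma H1_CS: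
  fixes f g :: "real \<Rightarrow> 'b::euclidean_space"
  assumes H: "H1_1d a b f g" and xy: "a \<le> x" "x \<le> y" "y \<le> b"
  shows "norm (f y - f x) \<le> sqrt (y - x) * L2norm {a<..<b} g"
proof -
  have gi: "set_integrable lebesgue {a..b} g" and L2: "L2_on {a<..<b} g"
    and id: "f y - f x = (LINT t:{x..y}|lebesgue. g t)"
    using H xy unfolding H1_1d_def by auto
  have g2: "set_integrable lebesgue {a..b} (\<lambda>t. norm (g t)^2)"
    using L2 SI_Ioo_Icc(1) unfolding L2_on_def by blast
  have gixy: "set_integrable lebesgue {x..y} g"
    by (rule set_integrable_subset[OF gi]) (use xy in auto)
  have g2xy: "set_integrable lebesgue {x..y} (\<lambda>t. norm (g t)^2)"
    by (rule set_integrable_subset[OF g2]) (use xy in auto)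
  define N where "N = (LINT t:{x..y}|lebesgue. norm (g t)^2)"
  have "norm (f y - f x) \<le> (LINT t:{x..y}|lebesgue. norm (g t))"
    unfolding id by (rule set_integral_norm_bound[OF gixy])
  also have "\<dots> \<le> sqrt (y - x) * sqrt N"
  proof (rule real_CS)
    fix l :: real assume l: "l > 0"
    have ic: "set_integrable lebesgue {x..y} (\<lambda>t. 1 / (2*l))"
      unfolding set_integrable_def
      by (intro integrable_scaleR_left integrable_real_indicator) (auto simp: less_top[symmetric] emeasure_lborel_Icc_eq)
    have i2: "set_integrable lebesgue {x..y} (\<lambda>t. (l/2) * norm (g t)^2)"
      using g2xy by simp
    have "(LINT t:{x..y}|lebesgue. norm (g t))
        \<le> (LINT t:{x..y}|lebesgue. (l/2) * norm (g t)^2 + 1 / (2*l))"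
    proof (rule set_integral_mono[OF set_integrable_norm[OF gixy] set_integral_add(1)[OF i2 ic]])
      fix t
      have "0 \<le> (l * norm (g t) - 1)^2" by simp
      hence "0 \<le> l * ((l/2) * norm (g t)^2 + 1 / (2*l) - norm (g t))" using l
        by (simp add: power2_eq_square algebra_simps)
      thus "norm (g t) \<le> (l/2) * norm (g t)^2 + 1 / (2*l)" using l
        by (simp add: zero_le_mult_iff)
    qed
    also have "\<dots> = (l/2) * N + (y - x) / (2*l)"
      unfolding set_integral_add(2)[OF i2 ic] N_def using xy
      by (simp add: set_integral_const less_top[symmetric])
    also have "\<dots> = (l * N + (y - x) / l) / 2" using l by (simp add: field_simps)
    finally show "(LINT t:{x..y}|lebesgue. norm (g t)) \<le> (l * N + (y - x) / l) / 2" .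
  qed (use xy L2int_nonneg N_def in auto)
  also have "\<dots> \<le> sqrt (y - x) * L2norm {a<..<b} g"
  proof (rule mult_left_mono)
    have "N \<le> (LINT t:{a..b}|lebesgue. norm (g t)^2)"
      unfolding N_def by (rule SI_subset_mono[OF g2]) (use xy in auto)
    also have "\<dots> = (LINT t:{a<..<b}|lebesgue. norm (g t)^2)" by (rule SI_Ioo_Icc(2)[symmetric])
    finally show "sqrt N \<le> L2norm {a<..<b} g" unfolding L2norm_def by simp
  qed (use xy in simp)
  finally show ?thesis .
qed

lemma H1_lin:
  fixes f g :: "real \<Rightarrow> 'b::euclidean_space" and T :: "'b \<Rightarrow> 'c::euclidean_space"
  assumes H: "H1_1d a b f g" and T: "bounded_linear T" "\<And>x. norm (T x) \<le> norm x"
  shows "H1_1d a b (\<lambda>t. T (f t)) (\<lambda>t. T (g t))"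
proof -
  have gi: "set_integrable lebesgue {a..b} g" using H unfolding H1_1d_def by auto
  show ?thesis unfolding H1_1d_def
  proof (intro conjI allI impI)
    show "L2_on {a<..<b} (\<lambda>t. T (f t))" "L2_on {a<..<b} (\<lambda>t. T (g t))"
      using H T L2_lin unfolding H1_1d_def by blast+
    show "set_integrable lebesgue {a..b} (\<lambda>t. T (g t))" by (rule SI_lin(1)[OF gi T(1)])
    fix x y assume xy: "a \<le> x" "x \<le> y" "y \<le> b"
    have gixy: "set_integrable lebesgue {x..y} g"
      by (rule set_integrable_subset[OF gi]) (use xy in auto)
    have "T (f y) - T (f x) = T (f y - f x)" using T(1) by (simp add: linear_simps)
    also have "\<dots> = T (LINT t:{x..y}|lebesgue. g t)" using H xy unfolding H1_1d_def by auto
    also have "\<dots> = (LINT t:{x..y}|lebesgue. T (g t))" by (rule SI_lin(2)[OF gixy T(1), symmetric])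
    finally show "T (f y) - T (f x) = (LINT t:{x..y}|lebesgue. T (g t))" .
  qed
qed

lemma H1_shift:
  fixes f g :: "real \<Rightarrow> 'b::euclidean_space"
  assumes H: "H1_1d a b f g"
  shows "H1_1d a b (\<lambda>t. f t - c) g"
proof -
  have "L2_on {a<..<b} (\<lambda>t. f t - c)"
    using L2_diff[of "{a<..<b}" f "\<lambda>_. c"] H L2_cont[of a b "\<lambda>_. c"] unfolding H1_1d_def
    by (auto intro: continuous_on_const)
  thus ?thesis using H unfolding H1_1d_def by auto
qed


lemma col_sq:
  fixes R :: "real^3^3"
  assumes "R \<in> SO3"
  shows "(R$1$3)^2 + (R$2$3)^2 + (R$3$3)^2 = 1"
proof -
  have "norm (column 3 R) = 1" using assms orthogonal_matrix_orthonormal_columns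
    unfolding SO3_def by blast
  hence "norm (column 3 R)^2 = 1" by simp
  thus ?thesis unfolding power2_norm_eq_inner inner_vec_def
    by (simp add: sum_3 column_def power2_eq_square)
qed

lemma norm_sq_mat:
  fixes M :: "real^3^3"
  shows "(M$1$3)^2 + (M$2$3)^2 + (M$3$3)^2 \<le> norm M ^2"
proof -
  have "norm M ^2 = (\<Sum>i\<in>UNIV. \<Sum>j\<in>UNIV. (M$i$j)^2)"
    unfolding power2_norm_eq_inner inner_vec_def by (simp add: power2_eq_square)
  thus ?thesis by (simp add: sum_3)
qed

lemma rot33:
  fixes R R0 :: "real^3^3"
  assumes "R \<in> SO3" "R0 \<in> SO3"
  shows "\<bar>R$3$3 - 1\<bar> \<le> 2 * \<bar>R0$3$3 - 1\<bar> + norm (R - R0)^2"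
proof -
  have p: "(R$1$3)^2 + (R$2$3)^2 + (R$3$3)^2 = 1" by (rule col_sq[OF assms(1)])
  have q: "(R0$1$3)^2 + (R0$2$3)^2 + (R0$3$3)^2 = 1" by (rule col_sq[OF assms(2)])
  have n: "(R$1$3 - R0$1$3)^2 + (R$2$3 - R0$2$3)^2 + (R$3$3 - R0$3$3)^2 \<le> norm (R - R0)^2"
    using norm_sq_mat[of "R - R0"] by simp
  have p3: "R$3$3 \<le> 1" using p by (smt (verit) power2_le_imp_le zero_le_power2 one_power2)
  have q3: "R0$3$3 \<le> 1" using q by (smt (verit) power2_le_imp_le zero_le_power2 one_power2)
  have k: "\<And>x y z::real. (x - z)^2 \<le> 2 * (y - z)^2 + 2 * (x - y)^2"
  proof -
    fix x y z :: real
    have "0 \<le> ((y - z) - (x - y))^2" by simp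
    thus "(x - z)^2 \<le> 2 * (y - z)^2 + 2 * (x - y)^2" by (simp add: power2_eq_square algebra_simps)
  qed
  have "(R$1$3 - 0)^2 + (R$2$3 - 0)^2 + (R$3$3 - 1)^2 \<le> 2 * ((R0$1$3 - 0)^2 + (R0$2$3 - 0)^2 + (R0$3$3 - 1)^2) + 2 * ((R$1$3 - R0$1$3)^2 + (R$2$3 - R0$2$3)^2 + (R$3$3 - R0$3$3)^2)"
    using k[of "R$1$3" 0 "R0$1$3"] k[of "R$2$3" 0 "R0$2$3"] k[of "R$3$3" 1 "R0$3$3"] by simp
  hence "2 * (1 - R$3$3) \<le> 2 * (2 * (1 - R0$3$3)) + 2 * norm (R - R0)^2"
    using p q n by (simp add: power2_eq_square algebra_simps)
  thus ?thesis using p3 q3 by simp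
qed

lemma H1_CS0:
  fixes f g :: "real \<Rightarrow> 'b::euclidean_space"
  assumes H: "H1_1d a b f g" and s: "s \<in> {a..b}" and t: "t \<in> {a..b}"
  shows "norm (f t - f s) \<le> sqrt \<bar>t - s\<bar> * L2norm {a<..<b} g"
proof (cases "s \<le> t")
  case True
  thus ?thesis using H1_CS[OF H, of s t] s t by auto
next
  case False
  hence "norm (f s - f t) \<le> sqrt (s - t) * L2norm {a<..<b} g" using H1_CS[OF H, of t s] s t by auto
  thus ?thesis using False by (simp add: norm_minus_commute)
qed

lemma H1_sup:
  fixes f g :: "real \<Rightarrow> 'b::euclidean_space"
  assumes H: "H1_1d a b f g" and s: "s \<in> {a..b}" and t: "t \<in> {a..b}"
  shows "norm (f t) \<le> norm (f s) + sqrt (b - a) * L2norm {a<..<b} g"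
proof -
  have "norm (f t) \<le> norm (f s) + norm (f t - f s)" by (metis norm_triangle_sub add.commute)
  also have "norm (f t - f s) \<le> sqrt \<bar>t - s\<bar> * L2norm {a<..<b} g" by (rule H1_CS0[OF H s t])
  also have "\<dots> \<le> sqrt (b - a) * L2norm {a<..<b} g"
    using s t by (intro mult_right_mono L2norm_nonneg) auto
  finally show ?thesis by simp
qed

lemma H1_L2:
  fixes f g :: "real \<Rightarrow> 'b::euclidean_space"
  assumes H: "H1_1d a b f g" and s: "s \<in> {a..b}"
  shows "L2norm {a<..<b} f \<le> sqrt (b - a) * norm (f s) + (b - a) * L2norm {a<..<b} g"
proof -
  have ab: "a \<le> b" using s by auto
  have "L2norm {a<..<b} f \<le> sqrt (measure lebesgue {a<..<b}) * (norm (f s) + sqrt (b - a) * L2norm {a<..<b} g)"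
  proof (rule L2norm_le_sup)
    show "emeasure lebesgue {a<..<b} < \<infinity>" using ab by (simp add: emeasure_lborel_Ioo)
    show "0 \<le> norm (f s) + sqrt (b - a) * L2norm {a<..<b} g"
      using ab by (intro add_nonneg_nonneg mult_nonneg_nonneg) (simp_all add: L2norm_nonneg)
  qed (use H1_sup[OF H s] in auto)
  also have "\<dots> = sqrt (b - a) * norm (f s) + sqrt (b - a) * (sqrt (b - a) * L2norm {a<..<b} g)"
    using ab by (simp add: distrib_left)
  also have "sqrt (b - a) * (sqrt (b - a) * L2norm {a<..<b} g) = (b - a) * L2norm {a<..<b} g"
    using ab by (simp add: mult.assoc[symmetric])
  finally show ?thesis .
qed

lemma LB:
  fixes F :: "real \<Rightarrow> 'b::euclidean_space"
  assumes cF: "continuous_on {a..b} F" and a: "a \<le> 0" and b: "0 \<le> b" and t: "t \<in> {a..b}"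
  shows "(LBINT s=0..ereal t. F s) = integral {a..t} F - integral {a..0} F"
proof -
  have FI: "F integrable_on {a..b}" by (rule integrable_continuous_interval[OF cF])
  have z: "(0::ereal) = ereal 0" by (simp add: zero_ereal_def)
  show ?thesis
  proof (cases "0 \<le> t")
    case True
    have "(LBINT s=ereal 0..ereal t. F s) = integral {0..t} F"
      by (rule interval_integral_eq_integral[OF True borel_integrable_atLeastAtMost'])
         (rule continuous_on_subset[OF cF], use t a in auto)
    moreover have "integral {a..0} F + integral {0..t} F = integral {a..t} F"
      by (rule Henstock_Kurzweil_Integration.integral_combine[OF a True])
         (rule integrable_on_subinterval[OF FI], use t a in auto)
    ultimately show ?thesis unfolding z by (simp add: algebra_simps)
  next
    case False
    have "(LBINT s=ereal t..ereal 0. F s) = integral {t..0} F"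
      apply (rule interval_integral_eq_integral) using False apply simp
      apply (rule borel_integrable_atLeastAtMost') apply (rule continuous_on_subset[OF cF]) using t b by auto
    moreover have "integral {a..t} F + integral {t..0} F = integral {a..0} F"
      by (rule Henstock_Kurzweil_Integration.integral_combine)
         (use t False in auto, rule integrable_on_subinterval[OF FI], use b in auto)
    ultimately show ?thesis unfolding z
      by (subst interval_integral_endpoints_reverse) (simp add: algebra_simps)
  qed
qed


definition CC :: "real \<Rightarrow> real \<Rightarrow> real" where
  "CC L C0 = 4 * (2*L+1)^3 * (\<bar>C0\<bar>+1)^2"

lemma sqrt3_le:
  fixes x y z :: real
  assumes "0 \<le> x" "0 \<le> y" "0 \<le> z"
  shows "sqrt (x^2 + y^2 + z^2) \<le> x + y + z"
proof -
  have "x^2 + y^2 + z^2 \<le> (x + y + z)^2"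
    using assms by (simp add: power2_eq_square algebra_simps)
  hence "sqrt (x^2 + y^2 + z^2) \<le> sqrt ((x + y + z)^2)" by (rule real_sqrt_le_mono)
  thus ?thesis using assms by simp
qed

lemma ax: "((M::real^'n^'m) *v axis j 1) $ i = M $ i $ j"
  by (simp add: matrix_vector_mult_def axis_def if_distrib cong: if_cong)

lemma comp_bl: "bounded_linear (\<lambda>M::real^3^3. M $ i $ j)"
  using bounded_linear_compose[OF bounded_linear_vec_nth bounded_linear_vec_nth] .

lemma comp_norm: "norm ((M::real^3^3) $ i $ j) \<le> norm M"
  using component_le_norm_cart[of "M $ i" j] Finite_Cartesian_Product.norm_nth_le[of M i] by simp

lemma main_fixed:
  fixes L C0 \<delta> :: real
  assumes \<delta>: "0 < \<delta>" "\<delta> \<le> L" and RD: "rod_decomposition C0 L \<delta> v Dv V dV Q dQ vb Dvb"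
  shows
    "(let d = dSO L \<delta> Dv;
          e3 = axis 3 1 :: real^3;
          W = (\<lambda>t. V t - t *\<^sub>R e3);
          Wm = (\<lambda>t::real. W 0 + (LBINT s=0..ereal t. (Q s - mat 1) *v e3));
          Ws = (\<lambda>t. W t - Wm t)
      in (\<exists>g. H1_1d (-\<delta>) L Ws g
              \<and> sqrt ((L2norm {-\<delta><..<L} Ws)^2 + (L2norm {-\<delta><..<L} g)^2) \<le> CC L C0 / \<delta> * d)
       \<and> (\<forall>\<alpha>\<in>{1::3, 2}. \<exists>g h.
              H1_1d (-\<delta>) L (\<lambda>t. Wm t $ \<alpha> - W 0 $ \<alpha>) g \<and> H1_1d (-\<delta>) L g h
              \<and> sqrt ((L2norm {-\<delta><..<L} (\<lambda>t. Wm t $ \<alpha> - W 0 $ \<alpha>))^2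
                      + (L2norm {-\<delta><..<L} g)^2 + (L2norm {-\<delta><..<L} h)^2)
                 \<le> CC L C0 / \<delta>^2 * d + CC L C0 * norm (Q 0 - mat 1))
       \<and> (\<exists>g. H1_1d (-\<delta>) L (\<lambda>t. Wm t $ 3 - Wm 0 $ 3) g
              \<and> sqrt ((L2norm {-\<delta><..<L} (\<lambda>t. Wm t $ 3 - Wm 0 $ 3))^2 + (L2norm {-\<delta><..<L} g)^2)
                 \<le> CC L C0 / \<delta>^4 * d^2 + CC L C0 * \<bar>((Q 0 - mat 1) *v e3) \<bullet> e3\<bar>)
       \<and> (\<exists>g. H1_1d (-\<delta>) L (\<lambda>t. Wm t $ 3) g
              \<and> L2norm {-\<delta><..<\<delta>} g
                 \<le> CC L C0 / (\<delta> powr (5/2)) * d^2 + CC L C0 * \<delta> powr (1/2) * \<bar>((Q 0 - mat 1) *v e3) \<bullet> e3\<bar>))"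
proof -
  define d where "d = dSO L \<delta> Dv"
  define e3 :: "real^3" where "e3 = axis 3 1"
  define W where "W = (\<lambda>t. V t - t *\<^sub>R e3)"
  define Wm where "Wm = (\<lambda>t::real. W 0 + (LBINT s=0..ereal t. (Q s - mat 1) *v e3))"
  define Ws where "Ws = (\<lambda>t. W t - Wm t)"
  define C where "C = CC L C0"
  define K where "K = \<bar>C0\<bar>"
  define M where "M = 2*L+1"
  define F where "F = (\<lambda>s. (Q s - mat 1) *v e3)"
  define P where "P = (\<lambda>t. integral {-\<delta>..t} F)"
  define g1 where "g1 = (\<lambda>t. dV t - Q t *v e3)"
  have HV: "H1_1d (-\<delta>) L V dV" and HQ: "H1_1d (-\<delta>) L Q dQ"
    and SO: "\<And>t. t \<in> {-\<delta>..L} \<Longrightarrow> Q t \<in> SO3"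
    and bQ: "L2norm {-\<delta><..<L} dQ \<le> C0 / \<delta>^2 * d"
    and bg: "L2norm {-\<delta><..<L} g1 \<le> C0 / \<delta> * d"
    using RD unfolding rod_decomposition_def d_def g1_def e3_def by auto
  have d0: "0 \<le> d" unfolding d_def dSO_def by (rule L2norm_nonneg)
  have K0: "0 \<le> K" unfolding K_def by simp
  have M1: "1 \<le> M" unfolding M_def using \<delta> by simp
  have lM: "L + \<delta> \<le> M" "L - - \<delta> \<le> M" "L + \<delta> + 1 \<le> M" unfolding M_def using \<delta> by auto
  have slM: "sqrt (L - - \<delta>) \<le> M"
  proof -
    have "sqrt (L - - \<delta>) \<le> sqrt M" using lM by simp
    also have "\<dots> \<le> sqrt (M^2)" using M1 by (intro real_sqrt_le_mono) (simp add: power2_eq_square)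
    also have "\<dots> = M" using M1 by simp
    finally show ?thesis .
  qed
  have G1: "L2norm {-\<delta><..<L} g1 \<le> K * (d / \<delta>)"
    using bg d0 \<delta> unfolding K_def by (smt (verit) mult_right_mono abs_ge_self divide_nonneg_nonneg times_divide_eq_left times_divide_eq_right)
  have G2: "L2norm {-\<delta><..<L} dQ \<le> K * (d / \<delta>^2)"
    using bQ d0 \<delta> unfolding K_def by (smt (verit) mult_right_mono abs_ge_self divide_nonneg_nonneg zero_le_power times_divide_eq_left times_divide_eq_right)
  have ab: "-\<delta> \<le> 0" "0 \<le> L" "-\<delta> \<le> L" "(0::real) \<in> {-\<delta>..L}" using \<delta> by auto
  have cQ: "continuous_on {-\<delta>..L} Q" by (rule H1_cont[OF HQ])
  have Fc: "F s = (\<chi> i. Q s $ i $ 3 - (if i = 3 then 1 else 0))" for s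
    unfolding F_def e3_def by (simp add: vec_eq_iff ax mat_def)
  have Fi3: "F s $ i = Q s $ i $ 3 - (if i = 3 then 1 else 0)" for s i
    by (simp add: Fc)
  have cF: "continuous_on {-\<delta>..L} F"
    unfolding Fc by (intro continuous_intros cQ)
  have Fi: "set_integrable lebesgue {-\<delta>..L} F"
    using absolutely_integrable_continuous[of "-\<delta>" L F] cF by simp
  have WmP: "Wm t = W 0 + (P t - P 0)" if "t \<in> {-\<delta>..L}" for t
    unfolding Wm_def P_def using LB[OF cF ab(1,2) that] unfolding F_def by simp
  have Pd: "P y - P x = (LINT t:{x..y}|lebesgue. F t)" if "-\<delta> \<le> x" "x \<le> y" "y \<le> L" for x y
  proof -
    have FI: "F integrable_on {-\<delta>..L}" by (rule integrable_continuous_interval[OF cF])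
    have "integral {-\<delta>..x} F + integral {x..y} F = integral {-\<delta>..y} F"
      by (rule Henstock_Kurzweil_Integration.integral_combine)
         (use that in auto, rule integrable_on_subinterval[OF FI], use that in auto)
    moreover have "(LINT t:{x..y}|lebesgue. F t) = integral {x..y} F"
      by (rule set_lebesgue_integral_eq_integral(2), rule set_integrable_subset[OF Fi]) (use that in auto)
    ultimately show ?thesis unfolding P_def by (simp add: algebra_simps)
  qed
  have HWm: "H1_1d (-\<delta>) L Wm F"
  proof (rule H1I[OF L2_cont[OF cF] Fi])
    fix x y assume xy: "-\<delta> \<le> x" "x \<le> y" "y \<le> L"
    show "Wm y - Wm x = (LINT t:{x..y}|lebesgue. F t)"
      using WmP[of x] WmP[of y] Pd[OF xy] xy by simp
  qed
  have HWmi: "H1_1d (-\<delta>) L (\<lambda>t. Wm t $ i) (\<lambda>t. F t $ i)" for i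
    by (rule H1_lin[OF HWm bounded_linear_vec_nth]) (simp add: component_le_norm_cart)
  have Wm0: "Wm 0 = W 0" using WmP[OF ab(4)] by simp
  have CE: "C = 4 * (M^3 * (K+1)^2)" unfolding C_def CC_def M_def K_def by simp
  have P0: "0 \<le> M^3 * (K+1)^2" using M1 by simp
  have m3: "1 \<le> M^3" "M \<le> M^3" "M^2 \<le> M^3"
    using M1 one_le_power[of M 3] power_increasing[of 1 3 M] power_increasing[of 2 3 M] by auto
  have k2: "1 \<le> (K+1)^2" "K \<le> (K+1)^2" "K^2 \<le> (K+1)^2" using K0
    by (simp_all add: power2_eq_square algebra_simps)
  have CM1: "M * K \<le> C"
  proof -
    have "M * K \<le> M^3 * (K+1)^2" by (rule mult_mono[OF m3(2) k2(2)]) (use M1 K0 in auto)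
    thus ?thesis using CE P0 by linarith
  qed
  have CM2: "3 * M^2 \<le> C" "3 * M^2 * K \<le> C"
  proof -
    have "M^2 * 1 \<le> M^3 * (K+1)^2" by (rule mult_mono[OF m3(3) k2(1)]) (use M1 K0 in auto)
    thus "3 * M^2 \<le> C" using CE P0 by linarith
    have "M^2 * K \<le> M^3 * (K+1)^2" by (rule mult_mono[OF m3(3) k2(2)]) (use M1 K0 in auto)
    thus "3 * M^2 * K \<le> C" using CE P0 by linarith
  qed
  have CM3: "4 * M^3 \<le> C" "4 * M^3 * K^2 \<le> C" "4 \<le> C" "2 * K^2 \<le> C"
  proof -
    have "M^3 * 1 \<le> M^3 * (K+1)^2" by (rule mult_left_mono[OF k2(1)]) (use M1 in auto)
    thus "4 * M^3 \<le> C" using CE P0 by linarith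
    have "M^3 * K^2 \<le> M^3 * (K+1)^2" by (rule mult_left_mono[OF k2(3)]) (use M1 in auto)
    thus "4 * M^3 * K^2 \<le> C" using CE P0 by linarith
    have "1 * 1 \<le> M^3 * (K+1)^2" by (rule mult_mono[OF m3(1) k2(1)]) (use M1 in auto)
    thus "4 \<le> C" using CE P0 by linarith
    have "1 * K^2 \<le> M^3 * (K+1)^2" by (rule mult_mono[OF m3(1) k2(3)]) (use M1 in auto)
    thus "2 * K^2 \<le> C" using CE P0 by linarith
  qed
  have C0': "0 \<le> C" using CM3(3) by simp
  have Qe: "Q t *v e3 = F t + e3" for t
    unfolding F_def by (simp add: matrix_vector_mult_diff_rdistrib)
  have cQe: "continuous_on {-\<delta>..L} (\<lambda>t. Q t *v e3)"
    unfolding Qe by (intro continuous_intros cF)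
  have dVL2: "L2_on {-\<delta><..<L} dV" and dVi: "set_integrable lebesgue {-\<delta>..L} dV"
    using HV unfolding H1_1d_def by auto
  have c1: "\<exists>g. H1_1d (-\<delta>) L Ws g
              \<and> sqrt ((L2norm {-\<delta><..<L} Ws)^2 + (L2norm {-\<delta><..<L} g)^2) \<le> C / \<delta> * d"
  proof (intro exI conjI)
    have L2g1: "L2_on {-\<delta><..<L} g1" unfolding g1_def by (rule L2_diff[OF dVL2 L2_cont[OF cQe]])
    have Qei: "set_integrable lebesgue {-\<delta>..L} (\<lambda>t. Q t *v e3)"
      using absolutely_integrable_continuous[of "-\<delta>" L "\<lambda>t. Q t *v e3"] cQe by simp
    have SIg1: "set_integrable lebesgue {-\<delta>..L} g1" unfolding g1_def by (rule set_integral_diff(1)[OF dVi Qei])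
    show HWs: "H1_1d (-\<delta>) L Ws g1"
    proof (rule H1I[OF L2g1 SIg1])
      fix x y assume xy: "-\<delta> \<le> x" "x \<le> y" "y \<le> L"
      have sub: "{x..y} \<subseteq> {-\<delta>..L}" using xy by auto
      have i1: "set_integrable lebesgue {x..y} dV" by (rule set_integrable_subset[OF dVi _ sub]) simp
      have i2: "set_integrable lebesgue {x..y} (\<lambda>t. Q t *v e3)" by (rule set_integrable_subset[OF Qei _ sub]) simp
      have ic: "set_integrable lebesgue {x..y} (\<lambda>t. e3)"
        unfolding set_integrable_def
        by (intro integrable_scaleR_left integrable_real_indicator) (auto simp: less_top[symmetric] emeasure_lborel_Icc_eq)
      have e1: "(LINT t:{x..y}|lebesgue. g1 t) = (LINT t:{x..y}|lebesgue. dV t) - (LINT t:{x..y}|lebesgue. Q t *v e3)"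
        unfolding g1_def by (rule set_integral_diff(2)[OF i1 i2])
      have e2: "(LINT t:{x..y}|lebesgue. F t) = (LINT t:{x..y}|lebesgue. Q t *v e3) - (y - x) *\<^sub>R e3"
      proof -
        have "(LINT t:{x..y}|lebesgue. F t) = (LINT t:{x..y}|lebesgue. Q t *v e3 - e3)"
          by (simp add: Qe)
        also have "\<dots> = (LINT t:{x..y}|lebesgue. Q t *v e3) - (LINT t:{x..y}|lebesgue. e3)"
          by (rule set_integral_diff(2)[OF i2 ic])
        also have "(LINT t:{x..y}|lebesgue. e3) = (y - x) *\<^sub>R e3"
          using xy by (simp add: set_integral_const less_top[symmetric] emeasure_lborel_Icc_eq)
        finally show ?thesis .
      qed
      have e3': "V y - V x = (LINT t:{x..y}|lebesgue. dV t)" using HV xy unfolding H1_1d_def by auto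
      have e4: "Wm y - Wm x = (LINT t:{x..y}|lebesgue. F t)" using HWm xy unfolding H1_1d_def by auto
      have "Ws y - Ws x = (V y - V x) - (y - x) *\<^sub>R e3 - (Wm y - Wm x)"
        unfolding Ws_def W_def by (simp add: algebra_simps)
      thus "Ws y - Ws x = (LINT t:{x..y}|lebesgue. g1 t)"
        unfolding e1 e3' e4 e2 by simp
    qed
    have Ws0: "Ws 0 = 0" unfolding Ws_def using Wm0 by simp
    have LWs: "L2norm {-\<delta><..<L} Ws \<le> (L - - \<delta>) * L2norm {-\<delta><..<L} g1"
      using H1_L2[OF HWs ab(4)] Ws0 by simp
    have "sqrt ((L2norm {-\<delta><..<L} Ws)^2 + (L2norm {-\<delta><..<L} g1)^2)
          \<le> L2norm {-\<delta><..<L} Ws + L2norm {-\<delta><..<L} g1"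
      by (rule sqrt_sum_squares_le_sum) (simp_all add: L2norm_nonneg)
    also have "\<dots> \<le> (L - - \<delta> + 1) * L2norm {-\<delta><..<L} g1"
      using LWs by (simp add: algebra_simps)
    also have "\<dots> \<le> M * (K * (d / \<delta>))"
      by (rule mult_mono) (use lM G1 L2norm_nonneg M1 K0 d0 \<delta> in auto)
    also have "\<dots> = (M * K) * (d / \<delta>)" by simp
    also have "\<dots> \<le> C * (d / \<delta>)" by (rule mult_right_mono[OF CM1]) (use d0 \<delta> in auto)
    finally show "sqrt ((L2norm {-\<delta><..<L} Ws)^2 + (L2norm {-\<delta><..<L} g1)^2) \<le> C / \<delta> * d"
      by simp
  qed
  have dQL2: "L2_on {-\<delta><..<L} dQ" using HQ unfolding H1_1d_def by auto
  have G2': "L2norm {-\<delta><..<L} dQ \<le> K * (d / \<delta>^2)" by (rule G2)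
  have c2: "\<forall>\<alpha>\<in>{1::3, 2}. \<exists>g h.
              H1_1d (-\<delta>) L (\<lambda>t. Wm t $ \<alpha> - W 0 $ \<alpha>) g \<and> H1_1d (-\<delta>) L g h
              \<and> sqrt ((L2norm {-\<delta><..<L} (\<lambda>t. Wm t $ \<alpha> - W 0 $ \<alpha>))^2
                      + (L2norm {-\<delta><..<L} g)^2 + (L2norm {-\<delta><..<L} h)^2)
                 \<le> C / \<delta>^2 * d + C * norm (Q 0 - mat 1)"
  proof
    fix \<alpha> :: 3 assume \<alpha>: "\<alpha> \<in> {1, 2}"
    hence a3: "\<alpha> \<noteq> 3" by auto
    define g where "g = (\<lambda>t. Q t $ \<alpha> $ 3)"
    define h where "h = (\<lambda>t. dQ t $ \<alpha> $ 3)"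
    define f where "f = (\<lambda>t. Wm t $ \<alpha> - W 0 $ \<alpha>)"
    have gF: "(\<lambda>t. F t $ \<alpha>) = g" unfolding g_def using Fi3 a3 by auto
    have Hf: "H1_1d (-\<delta>) L f g"
      using H1_shift[OF HWmi[of \<alpha>], of "W 0 $ \<alpha>"] unfolding gF f_def .
    have Hg: "H1_1d (-\<delta>) L g h"
      unfolding g_def h_def by (rule H1_lin[OF HQ comp_bl comp_norm])
    define n0 where "n0 = norm (Q 0 - mat 1)"
    define G where "G = L2norm {-\<delta><..<L} dQ"
    have Lh: "L2norm {-\<delta><..<L} h \<le> G"
      unfolding G_def h_def by (rule L2norm_mono[OF dQL2]) (rule comp_norm)
    have g0: "norm (g 0) \<le> n0"
    proof -
      have "g 0 = (Q 0 - mat 1) $ \<alpha> $ 3" unfolding g_def using a3 by (simp add: mat_def)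
      thus ?thesis unfolding n0_def using comp_norm by metis
    qed
    have f0: "f 0 = 0" unfolding f_def using Wm0 by simp
    have n00: "0 \<le> n0" "0 \<le> G" unfolding n0_def G_def by (simp_all add: L2norm_nonneg)
    have Lg: "L2norm {-\<delta><..<L} g \<le> M * (n0 + G)"
    proof -
      have "L2norm {-\<delta><..<L} g \<le> sqrt (L - - \<delta>) * norm (g 0) + (L - - \<delta>) * L2norm {-\<delta><..<L} h"
        by (rule H1_L2[OF Hg ab(4)])
      also have "\<dots> \<le> M * n0 + M * G"
        by (intro add_mono mult_mono) (use slM lM g0 Lh n00 L2norm_nonneg M1 \<delta> in auto)
      finally show ?thesis by (simp add: algebra_simps)
    qed
    have Lf: "L2norm {-\<delta><..<L} f \<le> M * (M * (n0 + G))"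
    proof -
      have "L2norm {-\<delta><..<L} f \<le> sqrt (L - - \<delta>) * norm (f 0) + (L - - \<delta>) * L2norm {-\<delta><..<L} g"
        by (rule H1_L2[OF Hf ab(4)])
      also have "\<dots> \<le> M * (M * (n0 + G))"
        using f0 by simp (rule mult_mono, use lM Lg L2norm_nonneg M1 \<delta> in auto)
      finally show ?thesis .
    qed
    have "sqrt ((L2norm {-\<delta><..<L} f)^2 + (L2norm {-\<delta><..<L} g)^2 + (L2norm {-\<delta><..<L} h)^2)
          \<le> L2norm {-\<delta><..<L} f + L2norm {-\<delta><..<L} g + L2norm {-\<delta><..<L} h"
      by (rule sqrt3_le) (simp_all add: L2norm_nonneg)
    also have "\<dots> \<le> M * (M * (n0 + G)) + M * (n0 + G) + (n0 + G)"
      using Lf Lg Lh n00 by linarith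
    also have "\<dots> \<le> 3 * M^2 * (n0 + G)"
    proof -
      have "M * (n0 + G) \<le> M^2 * (n0 + G)" "1 * (n0 + G) \<le> M^2 * (n0 + G)"
        using M1 n00 power_increasing[of 1 2 M] one_le_power[of M 2] by (intro mult_right_mono; simp)+
      thus ?thesis by (simp add: power2_eq_square algebra_simps)
    qed
    also have "\<dots> \<le> 3 * M^2 * n0 + (3 * M^2 * K) * (d / \<delta>^2)"
    proof -
      have X: "3*M^2*G \<le> 3*M^2*(K*(d/\<delta>^2))" unfolding G_def by (rule mult_left_mono[OF G2']) simp
      have e1: "3*M^2*(n0+G) = 3*M^2*n0 + 3*M^2*G" by (simp add: algebra_simps)
      have e2: "3*M^2*(K*(d/\<delta>^2)) = (3*M^2*K)*(d/\<delta>^2)" by simp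
      show ?thesis using X e1 e2 by linarith
    qed
    also have "\<dots> \<le> C * n0 + C * (d / \<delta>^2)"
      by (intro add_mono mult_right_mono CM2) (use n00 d0 \<delta> in auto)
    finally show "\<exists>g h. H1_1d (-\<delta>) L (\<lambda>t. Wm t $ \<alpha> - W 0 $ \<alpha>) g \<and> H1_1d (-\<delta>) L g h
              \<and> sqrt ((L2norm {-\<delta><..<L} (\<lambda>t. Wm t $ \<alpha> - W 0 $ \<alpha>))^2
                      + (L2norm {-\<delta><..<L} g)^2 + (L2norm {-\<delta><..<L} h)^2)
                 \<le> C / \<delta>^2 * d + C * norm (Q 0 - mat 1)"
      using Hf Hg unfolding f_def n0_def by (intro exI[of _ g] exI[of _ h]) (auto simp: algebra_simps)
  qed
  define c where "c = \<bar>((Q 0 - mat 1) *v e3) \<bullet> e3\<bar>"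
  define G where "G = L2norm {-\<delta><..<L} dQ"
  have G0: "0 \<le> G" unfolding G_def by (rule L2norm_nonneg)
  have c0: "0 \<le> c" unfolding c_def by simp
  have c_eq: "c = \<bar>Q 0 $ 3 $ 3 - 1\<bar>"
    unfolding c_def e3_def by (simp add: inner_axis ax mat_def)
  have GG: "G^2 \<le> K^2 * d^2 / \<delta>^4"
  proof -
    have "G^2 \<le> (K * (d / \<delta>^2))^2" using G2 G0 unfolding G_def by (intro power_mono) auto
    also have "\<dots> = K^2 * d^2 / \<delta>^4" by (simp add: power_mult_distrib power_divide power_mult[symmetric])
    finally show ?thesis .
  qed
  have gb: "norm (F t $ 3) \<le> 2 * c + \<bar>t\<bar> * G^2" if t: "t \<in> {-\<delta>..L}" for t
  proof -
    have "norm (F t $ 3) = \<bar>Q t $ 3 $ 3 - 1\<bar>" by (simp add: Fi3)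
    also have "\<dots> \<le> 2 * \<bar>Q 0 $ 3 $ 3 - 1\<bar> + norm (Q t - Q 0)^2"
      by (rule rot33[OF SO[OF t] SO[OF ab(4)]])
    also have "norm (Q t - Q 0)^2 \<le> (sqrt \<bar>t - 0\<bar> * G)^2"
      unfolding G_def by (intro power_mono H1_CS0[OF HQ ab(4) t]) simp
    also have "(sqrt \<bar>t - 0\<bar> * G)^2 = \<bar>t\<bar> * G^2" by (simp add: power_mult_distrib)
    finally show ?thesis unfolding c_eq by simp
  qed
  have c4: "\<exists>g. H1_1d (-\<delta>) L (\<lambda>t. Wm t $ 3) g
              \<and> L2norm {-\<delta><..<\<delta>} g
                 \<le> C / (\<delta> powr (5/2)) * d^2 + C * \<delta> powr (1/2) * c"
  proof (intro exI conjI)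
    show "H1_1d (-\<delta>) L (\<lambda>t. Wm t $ 3) (\<lambda>t. F t $ 3)" by (rule HWmi)
    define s where "s = sqrt \<delta>"
    have s0: "0 < s" unfolding s_def using \<delta> by simp
    have ds: "\<delta> = s^2" unfolding s_def using \<delta> by simp
    have p1: "\<delta> powr (1/2) = s" unfolding s_def using \<delta> by (simp add: powr_half_sqrt)
    have p5: "\<delta> powr (5/2) = s^5"
    proof -
      have "\<delta> powr (5/2) = \<delta> powr (2 + 1/2)" by simp
      also have "\<dots> = \<delta> powr 2 * \<delta> powr (1/2)" by (rule powr_add)
      also have "\<dots> = \<delta>^2 * s" using p1 \<delta> by simp
      also have "\<delta>^2 * s = s^5" unfolding ds by (simp add: eval_nat_numeral)
      finally show ?thesis .
    qed
    have "L2norm {-\<delta><..<\<delta>} (\<lambda>t. F t $ 3) \<le> sqrt (measure lebesgue {-\<delta><..<\<delta>}) * (2 * c + \<delta> * G^2)"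
    proof (rule L2norm_le_sup)
      show "emeasure lebesgue {-\<delta><..<\<delta>} < \<infinity>" using \<delta> by (simp add: emeasure_lborel_Ioo)
      show "0 \<le> 2 * c + \<delta> * G^2" using c0 \<delta> by simp
      fix t assume t: "t \<in> {-\<delta><..<\<delta>}"
      hence t': "t \<in> {-\<delta>..L}" "\<bar>t\<bar> \<le> \<delta>" using \<delta> by auto
      have "\<bar>t\<bar> * G^2 \<le> \<delta> * G^2" by (rule mult_right_mono[OF t'(2)]) simp
      thus "norm (F t $ 3) \<le> 2 * c + \<delta> * G^2" using gb[OF t'(1)] by linarith
    qed simp
    also have "sqrt (measure lebesgue {-\<delta><..<\<delta>}) = sqrt 2 * s"
      using \<delta> unfolding s_def by (simp add: real_sqrt_mult)
    also have "sqrt 2 * s * (2 * c + \<delta> * G^2) = (2 * sqrt 2) * s * c + sqrt 2 * s^3 * G^2"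
      unfolding ds by (simp add: algebra_simps power2_eq_square power3_eq_cube)
    also have "\<dots> \<le> C * s * c + C / s^5 * d^2"
    proof (rule add_mono)
      have "2 * sqrt 2 \<le> C" using CM3(3) sqrt2_less_2 by linarith
      thus "(2 * sqrt 2) * s * c \<le> C * s * c" using s0 c0 by (intro mult_right_mono) auto
      have "sqrt 2 * s^3 * G^2 \<le> sqrt 2 * s^3 * (K^2 * d^2 / \<delta>^4)"
        by (rule mult_left_mono[OF GG]) (use s0 in simp)
      also have "\<dots> = sqrt 2 * K^2 * (d^2 / s^5)"
        unfolding ds using s0 by (simp add: field_simps power_mult[symmetric] power_add[symmetric] eval_nat_numeral)
      also have "\<dots> \<le> C * (d^2 / s^5)"
      proof (rule mult_right_mono)
        have "sqrt 2 * K^2 \<le> 2 * K^2" using sqrt2_less_2 by (intro mult_right_mono) auto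
        thus "sqrt 2 * K^2 \<le> C" using CM3(4) by linarith
      qed (use s0 in simp)
      finally show "sqrt 2 * s^3 * G^2 \<le> C / s^5 * d^2" by simp
    qed
    finally show "L2norm {-\<delta><..<\<delta>} (\<lambda>t. F t $ 3) \<le> C / (\<delta> powr (5/2)) * d^2 + C * \<delta> powr (1/2) * c"
      unfolding p1 p5 by (simp add: algebra_simps)
  qed
  have c3: "\<exists>g. H1_1d (-\<delta>) L (\<lambda>t. Wm t $ 3 - Wm 0 $ 3) g
              \<and> sqrt ((L2norm {-\<delta><..<L} (\<lambda>t. Wm t $ 3 - Wm 0 $ 3))^2 + (L2norm {-\<delta><..<L} g)^2)
                 \<le> C / \<delta>^4 * d^2 + C * c"
  proof (intro exI conjI)
    define f where "f = (\<lambda>t. Wm t $ 3 - Wm 0 $ 3)"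
    define g where "g = (\<lambda>t. F t $ 3)"
    show Hf: "H1_1d (-\<delta>) L (\<lambda>t. Wm t $ 3 - Wm 0 $ 3) g"
      unfolding g_def by (rule H1_shift[OF HWmi])
    define S3 where "S3 = 2 * c + M * G^2"
    have S30: "0 \<le> S3" unfolding S3_def using c0 M1 by simp
    have Lg: "L2norm {-\<delta><..<L} g \<le> M * S3"
    proof -
      have "L2norm {-\<delta><..<L} g \<le> sqrt (measure lebesgue {-\<delta><..<L}) * S3"
      proof (rule L2norm_le_sup[OF _ _ S30])
        show "emeasure lebesgue {-\<delta><..<L} < \<infinity>" using \<delta> by (simp add: emeasure_lborel_Ioo)
        fix t assume t: "t \<in> {-\<delta><..<L}"
        hence t': "t \<in> {-\<delta>..L}" "\<bar>t\<bar> \<le> M" using \<delta> lM by auto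
        have "\<bar>t\<bar> * G^2 \<le> M * G^2" by (rule mult_right_mono[OF t'(2)]) simp
        thus "norm (g t) \<le> S3" using gb[OF t'(1)] unfolding g_def S3_def by linarith
      qed simp
      also have "\<dots> \<le> M * S3"
        by (rule mult_right_mono[OF _ S30]) (use slM \<delta> in simp)
      finally show ?thesis .
    qed
    have f0: "f 0 = 0" unfolding f_def by simp
    have Lf: "L2norm {-\<delta><..<L} f \<le> M * (M * S3)"
    proof -
      have "L2norm {-\<delta><..<L} f \<le> sqrt (L - - \<delta>) * norm (f 0) + (L - - \<delta>) * L2norm {-\<delta><..<L} g"
        by (rule H1_L2[OF Hf[folded f_def] ab(4)])
      also have "\<dots> \<le> M * (M * S3)"
        using f0 by simp (rule mult_mono, use lM Lg L2norm_nonneg M1 \<delta> in auto)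
      finally show ?thesis .
    qed
    have "sqrt ((L2norm {-\<delta><..<L} f)^2 + (L2norm {-\<delta><..<L} g)^2)
          \<le> L2norm {-\<delta><..<L} f + L2norm {-\<delta><..<L} g"
      by (rule sqrt_sum_squares_le_sum) (simp_all add: L2norm_nonneg)
    also have "\<dots> \<le> M * (M * S3) + M * S3" using Lf Lg by linarith
    also have "\<dots> \<le> 2 * M^2 * S3"
    proof -
      have "M * S3 \<le> M^2 * S3"
        using M1 S30 power_increasing[of 1 2 M] by (intro mult_right_mono) simp_all
      thus ?thesis by (simp add: power2_eq_square algebra_simps)
    qed
    also have "\<dots> = 4 * M^2 * c + 2 * M^3 * G^2"
      unfolding S3_def by (simp add: algebra_simps power2_eq_square power3_eq_cube)
    also have "\<dots> \<le> C * c + C / \<delta>^4 * d^2"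
    proof (rule add_mono)
      have "4 * M^2 \<le> C" using CM3(1) m3(3) by linarith
      thus "4 * M^2 * c \<le> C * c" using c0 by (rule mult_right_mono)
      have "2 * M^3 * G^2 \<le> 2 * M^3 * (K^2 * d^2 / \<delta>^4)"
        by (rule mult_left_mono[OF GG]) (use M1 in simp)
      also have "\<dots> = (2 * M^3 * K^2) * (d^2 / \<delta>^4)" by simp
      also have "\<dots> \<le> C * (d^2 / \<delta>^4)"
      proof (rule mult_right_mono)
        have "2 * M^3 * K^2 \<le> 4 * M^3 * K^2" using M1 by simp
        thus "2 * M^3 * K^2 \<le> C" using CM3(2) by linarith
      qed (use \<delta> in simp)
      finally show "2 * M^3 * G^2 \<le> C / \<delta>^4 * d^2" by simp
    qed
    finally show "sqrt ((L2norm {-\<delta><..<L} (\<lambda>t. Wm t $ 3 - Wm 0 $ 3))^2 + (L2norm {-\<delta><..<L} g)^2)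
                 \<le> C / \<delta>^4 * d^2 + C * c"
      unfolding f_def by (simp add: algebra_simps)
  qed
  show ?thesis
    unfolding Let_def
    using c1 c2 c3 c4
    unfolding Ws_def Wm_def W_def e3_def d_def C_def c_def
    by blast
qed

theorem lemma4p1:
  fixes \<omega> \<gamma>0 :: "(real^2) set" and L C0 :: real
  assumes "lipschitz_domain \<omega>"
    and "cball (0::real^2) 1 \<subseteq> \<omega>"
    and "openin (top_of_set (frontier \<omega>)) \<gamma>0"
    and "finite (components \<gamma>0)"
    and "pairwise (\<lambda>A B. closure A \<inter> closure B = {}) (components \<gamma>0)"
    and "L > 0"
  shows "\<exists>C::real. \<forall>\<delta> v Dv V dV Q dQ vb Dvb.
     0 < \<delta> \<and> \<delta> \<le> L \<and> in_D \<omega> \<gamma>0 L \<delta> v Dv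
     \<and> rod_decomposition C0 L \<delta> v Dv V dV Q dQ vb Dvb \<longrightarrow>
     (let d = dSO L \<delta> Dv;
          e3 = axis 3 1 :: real^3;
          W = (\<lambda>t. V t - t *\<^sub>R e3);
          Wm = (\<lambda>t::real. W 0 + (LBINT s=0..ereal t. (Q s - mat 1) *v e3));
          Ws = (\<lambda>t. W t - Wm t)
      in (\<exists>g. H1_1d (-\<delta>) L Ws g
              \<and> sqrt ((L2norm {-\<delta><..<L} Ws)^2 + (L2norm {-\<delta><..<L} g)^2) \<le> C / \<delta> * d)
       \<and> (\<forall>\<alpha>\<in>{1::3, 2}. \<exists>g h.
              H1_1d (-\<delta>) L (\<lambda>t. Wm t $ \<alpha> - W 0 $ \<alpha>) g \<and> H1_1d (-\<delta>) L g h
              \<and> sqrt ((L2norm {-\<delta><..<L} (\<lambda>t. Wm t $ \<alpha> - W 0 $ \<alpha>))^2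
                      + (L2norm {-\<delta><..<L} g)^2 + (L2norm {-\<delta><..<L} h)^2)
                 \<le> C / \<delta>^2 * d + C * norm (Q 0 - mat 1))
       \<and> (\<exists>g. H1_1d (-\<delta>) L (\<lambda>t. Wm t $ 3 - Wm 0 $ 3) g
              \<and> sqrt ((L2norm {-\<delta><..<L} (\<lambda>t. Wm t $ 3 - Wm 0 $ 3))^2 + (L2norm {-\<delta><..<L} g)^2)
                 \<le> C / \<delta>^4 * d^2 + C * \<bar>((Q 0 - mat 1) *v e3) \<bullet> e3\<bar>)
       \<and> (\<exists>g. H1_1d (-\<delta>) L (\<lambda>t. Wm t $ 3) g
              \<and> L2norm {-\<delta><..<\<delta>} g
                 \<le> C / (\<delta> powr (5/2)) * d^2 + C * \<delta> powr (1/2) * \<bar>((Q 0 - mat 1) *v e3) \<bullet> e3\<bar>))"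
  apply (rule exI[of _ "CC L C0"])
  apply (intro allI impI)
  apply (rule main_fixed)
  apply auto
  done

end
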